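(* Fix $\rho\in(0,1)$. The set of parameters $(\pi,\gamma)\in\Theta$ for which some optimal solution of the exploit LP satisfies (a) the fairness constraint $\alpha_{x,1}=\alpha_{x,0}$ for all $x$, respectively (b) the masking constraint $\sum_{x=1}^k\Pr(X=x)(\alpha_{x,1}-\alpha_{x,0})=0$, has Lebesgue measure zero in $\Theta$.
   Context: Fix an integer $k\ge 2$, $X\in\{1,\dots,k\}$, $P\in\{0,1\}$. The parameter space is $\Theta=\{(\pi,\gamma):\pi_{x,p}>0,\ \sum_{x,p}\pi_{x,p}=1,\ \gamma\in[0,1]^{2k}\}$ with Lebesgue measure, where $\pi_{x,p}=\Pr(X=x,P=p)$, $\Pr(X=x)=\pi_{x,0}+\pi_{x,1}$ and $\gamma_{x,p}=\mathbb{E}[Y\mid x,p]$. The exploit LP is: maximize $\mathcal{W}(\alpha)=\sum_{x,p}\gamma_{x,p}\alpha_{x,p}\pi_{x,p}$ over $\alpha\in[0,1]^{2k}$ subject to $\sum_{x,p}\alpha_{x,p}\pi_{x,p}=\rho$. *)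

theory Defs
  imports "HOL-Analysis.Analysis"
begin

text \<open>Cells (x,p) with x in {1..k} and p in {0,1}; p = 0 is False, p = 1 is True.\<close>
definition cells :: "nat \<Rightarrow> (nat \<times> bool) set" where
  "cells k = {1..k} \<times> (UNIV :: bool set)"

definition Theta :: "nat \<Rightarrow> (nat \<times> bool \<Rightarrow> real) \<Rightarrow> (nat \<times> bool \<Rightarrow> real) \<Rightarrow> bool" where
  "Theta k \<pi> \<gamma> \<longleftrightarrow> (\<forall>c\<in>cells k. 0 < \<pi> c \<and> 0 \<le> \<gamma> c \<and> \<gamma> c \<le> 1) \<and> (\<Sum>c\<in>cells k. \<pi> c) = 1"

definition feasible :: "nat \<Rightarrow> (nat \<times> bool \<Rightarrow> real) \<Rightarrow> real \<Rightarrow> (nat \<times> bool \<Rightarrow> real) \<Rightarrow> bool" where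
  "feasible k \<pi> \<rho> \<alpha> \<longleftrightarrow> (\<forall>c\<in>cells k. 0 \<le> \<alpha> c \<and> \<alpha> c \<le> 1) \<and> (\<Sum>c\<in>cells k. \<alpha> c * \<pi> c) = \<rho>"

definition welfare :: "nat \<Rightarrow> (nat \<times> bool \<Rightarrow> real) \<Rightarrow> (nat \<times> bool \<Rightarrow> real) \<Rightarrow> (nat \<times> bool \<Rightarrow> real) \<Rightarrow> real" where
  "welfare k \<pi> \<gamma> \<alpha> = (\<Sum>c\<in>cells k. \<gamma> c * \<alpha> c * \<pi> c)"

definition optimal :: "nat \<Rightarrow> (nat \<times> bool \<Rightarrow> real) \<Rightarrow> (nat \<times> bool \<Rightarrow> real) \<Rightarrow> real \<Rightarrow> (nat \<times> bool \<Rightarrow> real) \<Rightarrow> bool" where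
  "optimal k \<pi> \<gamma> \<rho> \<alpha> \<longleftrightarrow> feasible k \<pi> \<rho> \<alpha> \<and>
     (\<forall>\<beta>. feasible k \<pi> \<rho> \<beta> \<longrightarrow> welfare k \<pi> \<gamma> \<beta> \<le> welfare k \<pi> \<gamma> \<alpha>)"

definition fair :: "nat \<Rightarrow> (nat \<times> bool \<Rightarrow> real) \<Rightarrow> bool" where
  "fair k \<alpha> \<longleftrightarrow> (\<forall>x\<in>{1..k}. \<alpha> (x, True) = \<alpha> (x, False))"

definition masked :: "nat \<Rightarrow> (nat \<times> bool \<Rightarrow> real) \<Rightarrow> (nat \<times> bool \<Rightarrow> real) \<Rightarrow> bool" where
  "masked k \<pi> \<alpha> \<longleftrightarrow>
     (\<Sum>x=1..k. (\<pi> (x, False) + \<pi> (x, True)) * (\<alpha> (x, True) - \<alpha> (x, False))) = 0"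

text \<open>Coordinates for Lebesgue measure on Theta: the free coordinates of pi are all
  cells except (k,1) (whose value is 1 minus the others), plus all coordinates of gamma.\<close>
definition param_index :: "nat \<Rightarrow> ((nat \<times> bool) + (nat \<times> bool)) set" where
  "param_index k = Inl ` (cells k - {(k, True)}) \<union> Inr ` cells k"

definition pi_of :: "nat \<Rightarrow> ((nat \<times> bool) + (nat \<times> bool) \<Rightarrow> real) \<Rightarrow> nat \<times> bool \<Rightarrow> real" where
  "pi_of k \<theta> c = (if c = (k, True) then 1 - (\<Sum>d\<in>cells k - {(k, True)}. \<theta> (Inl d))
                   else \<theta> (Inl c))"

definition gamma_of :: "((nat \<times> bool) + (nat \<times> bool) \<Rightarrow> real) \<Rightarrow> nat \<times> bool \<Rightarrow> real" where
  "gamma_of \<theta> c = \<theta> (Inr c)"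

definition param_lebesgue :: "nat \<Rightarrow> ((nat \<times> bool) + (nat \<times> bool) \<Rightarrow> real) measure" where
  "param_lebesgue k = PiM (param_index k) (\<lambda>_. lborel)"

end

theory Submission
  imports Defs "HOL-Computational_Algebra.Polynomial"
begin

lemma upd_measurable:
  assumes "i \<in> I"
  shows "(\<lambda>\<theta>. \<theta>(i := \<theta> i + (d::real))) \<in> measurable (PiM I (\<lambda>_. lborel)) (PiM I (\<lambda>_. lborel))"
proof -
  have eq: "(\<lambda>\<theta>. \<theta>(i := \<theta> i + d)) = (\<lambda>\<theta> c. (if c = i then \<theta> i + d else \<theta> c))"
    by (auto simp: fun_eq_iff)
  show ?thesis unfolding eq
    apply (rule measurable_PiM_single')
    subgoal for c using assms by (cases "c = i") auto
    using assms by (auto simp: space_PiM PiE_def extensional_def)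
qed

lemma quad_roots_finite:
  fixes A B C :: real
  assumes "\<not> (A = 0 \<and> B = 0 \<and> C = 0)"
  shows "finite {y. A*y^2 + B*y + C = 0}"
proof -
  have "[:C,B,A:] \<noteq> 0" using assms by auto
  then have "finite {y. poly [:C,B,A:] y = 0}" by (rule poly_roots_finite)
  moreover have "poly [:C,B,A:] y = A*y^2 + B*y + C" for y
    by (simp add: algebra_simps power2_eq_square)
  ultimately show ?thesis by (simp add: add.commute add.left_commute)
qed

lemma piece_null:
  fixes f :: "('i \<Rightarrow> real) \<Rightarrow> real"
  assumes fin: "finite I" and iI: "i \<in> I"
    and fm[measurable]: "f \<in> borel_measurable (PiM I (\<lambda>_. lborel))"
    and quad: "\<And>\<theta>. \<theta> \<in> space (PiM I (\<lambda>_. lborel)) \<Longrightarrow> \<exists>A B C. \<forall>y. f (\<theta>(i:=y)) = A*y^2 + B*y + C"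
  shows "{\<theta>\<in>space (PiM I (\<lambda>_. lborel)). f \<theta> = 0 \<and> (f (\<theta>(i:=\<theta> i+1)) \<noteq> 0 \<or> f (\<theta>(i:=\<theta> i + -1)) \<noteq> 0)}
          \<in> null_sets (PiM I (\<lambda>_. lborel))"
proof -
  let ?M = "PiM I (\<lambda>_. lborel)"
  define J where "J = I - {i}"
  have IJ: "I = insert i J" "i \<notin> J" "finite J" using iI fin by (auto simp: J_def)
  define P where "P = {\<theta>\<in>space ?M. f \<theta> = 0 \<and> (f (\<theta>(i:=\<theta> i+1)) \<noteq> 0 \<or> f (\<theta>(i:=\<theta> i + -1)) \<noteq> 0)}"
  have m1[measurable]: "(\<lambda>\<theta>. f (\<theta>(i:=\<theta> i+d))) \<in> borel_measurable ?M" for d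
    using measurable_comp[OF upd_measurable[OF iI, of d] fm] by (simp add: comp_def)
  have Pm[measurable]: "P \<in> sets ?M" unfolding P_def by measurable
  interpret product_sigma_finite "\<lambda>_. lborel" by standard
  have "emeasure ?M P = (\<integral>\<^sup>+ \<theta>. indicator P \<theta> \<partial>?M)" by simp
  also have "\<dots> = (\<integral>\<^sup>+ x. (\<integral>\<^sup>+ y. indicator P (x(i := y)) \<partial>lborel) \<partial>(PiM J (\<lambda>_. lborel::real measure)))"
    unfolding IJ(1) by (rule product_nn_integral_insert) (use IJ Pm in auto)
  also have "\<dots> = (\<integral>\<^sup>+ x. (0::ennreal) \<partial>(PiM J (\<lambda>_. lborel::real measure)))"
  proof -
  have inner: "(\<integral>\<^sup>+ y. indicator P (x(i := y)) \<partial>lborel) = 0" if x: "x \<in> space (PiM J (\<lambda>_. lborel::real measure))" for x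
  proof -
    define \<phi> where "\<phi> y = f (x(i:=y))" for y
    define R where "R = {y. \<phi> y = 0 \<and> (\<phi> (y+1) \<noteq> 0 \<or> \<phi> (y + -1) \<noteq> 0)}"
    have x0: "x(i:=0) \<in> space ?M" using x IJ by (auto simp: space_PiM PiE_def extensional_def)
    obtain A B C where ABC: "\<And>y. \<phi> y = A*y^2 + B*y + C"
      using quad[OF x0] unfolding \<phi>_def by auto
    have finR: "finite R"
    proof (cases "A = 0 \<and> B = 0 \<and> C = 0")
      case True then have "R = {}" by (auto simp: R_def ABC)
      then show ?thesis by simp
    next
      case False
      have "R \<subseteq> {y. A*y^2 + B*y + C = 0}" by (auto simp: R_def ABC)
      then show ?thesis using quad_roots_finite[OF False] finite_subset by blast
    qed
    have "AE y in lborel. y \<notin> R"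
      using countable_imp_null_set_lborel[of R] finR countable_finite
      by (intro AE_not_in) auto
    then have AE0: "AE y in lborel. indicator P (x(i := y)) = (0::ennreal)"
      by eventually_elim (auto simp: P_def R_def \<phi>_def indicator_def)
    show "(\<integral>\<^sup>+ y. indicator P (x(i := y)) \<partial>lborel) = 0"
      using nn_integral_cong_AE[OF AE0] by simp
  qed
  show ?thesis
    apply (rule nn_integral_cong)
    apply (erule inner)
    done
  qed
  also have "(\<integral>\<^sup>+ x. 0 \<partial>(PiM J (\<lambda>_. lborel::real measure))) = (0::ennreal)" by simp
  finally show ?thesis using Pm unfolding P_def by (simp add: null_sets_def)
qed

definition Mf :: "nat \<Rightarrow> (nat \<times> bool \<Rightarrow> real) \<Rightarrow> (nat \<times> bool \<Rightarrow> real) \<Rightarrow> real" where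
  "Mf k \<pi> \<beta> = (\<Sum>x=1..k. (\<pi> (x, False) + \<pi> (x, True)) * (\<beta> (x, True) - \<beta> (x, False)))"

definition ind :: "(nat \<times> bool) set \<Rightarrow> nat \<times> bool \<Rightarrow> real" where
  "ind H c = (if c \<in> H then 1 else 0)"

definition Gf :: "nat \<Rightarrow> real \<Rightarrow> (nat \<times> bool) set \<Rightarrow> nat \<times> bool \<Rightarrow> (nat \<times> bool \<Rightarrow> real) \<Rightarrow> real" where
  "Gf k \<rho> H cs \<pi> = \<pi> cs * Mf k \<pi> (ind H) + (\<rho> - (\<Sum>c\<in>H. \<pi> c)) * Mf k \<pi> (ind {cs})"

definition ej :: "nat \<Rightarrow> nat \<times> bool \<Rightarrow> nat \<times> bool \<Rightarrow> real" where
  "ej k j c = (if c = j then 1 else 0) - (if c = (k, True) then 1 else 0)"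

lemma finite_cells[simp]: "finite (cells k)" by (simp add: cells_def)

lemma Mf_shift: "Mf k (\<lambda>c. \<pi> c + s * e c) \<beta> = Mf k \<pi> \<beta> + s * Mf k e \<beta>"
  unfolding Mf_def sum_distrib_left sum.distrib[symmetric] by (rule sum.cong) (simp_all add: algebra_simps)

lemma sum_shift: "(\<Sum>c\<in>H. \<pi> c + (s::real) * e c) = (\<Sum>c\<in>H. \<pi> c) + s * (\<Sum>c\<in>H. e c)"
  unfolding sum.distrib sum_distrib_left ..

lemma G_shift: "Gf k \<rho> H cs (\<lambda>c. \<pi> c + s * e c) = Gf k \<rho> H cs \<pi>
   + s * (\<pi> cs * Mf k e (ind H) + e cs * Mf k \<pi> (ind H) - (\<Sum>c\<in>H. e c) * Mf k \<pi> (ind {cs})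
          + (\<rho> - (\<Sum>c\<in>H. \<pi> c)) * Mf k e (ind {cs}))
   + s^2 * (e cs * Mf k e (ind H) - (\<Sum>c\<in>H. e c) * Mf k e (ind {cs}))"
  unfolding Gf_def Mf_shift sum_shift by (simp add: algebra_simps power2_eq_square)

lemma Mf_ej:
  assumes "j \<in> cells k"
  shows "Mf k (ej k j) \<beta> = (\<beta> (fst j, True) - \<beta> (fst j, False)) - (\<beta> (k, True) - \<beta> (k, False))"
proof -
  obtain a b where j: "j = (a, b)" by (cases j)
  have a: "a \<in> {1..k}" and k: "k \<in> {1..k}" using assms j by (auto simp: cells_def)
  have "Mf k (ej k j) \<beta> = (\<Sum>x=1..k. ((if x = a then 1 else 0) - (if x = k then 1 else 0)) * (\<beta> (x, True) - \<beta> (x, False)))"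
    unfolding Mf_def by (rule sum.cong) (auto simp: ej_def j)
  also have "\<dots> = (\<Sum>x=1..k. (if x = a then (\<beta> (x, True) - \<beta> (x, False)) else 0)) - (\<Sum>x=1..k. (if x = k then (\<beta> (x, True) - \<beta> (x, False)) else 0))"
    unfolding sum_subtractf[symmetric] by (rule sum.cong) auto
  also have "\<dots> = (\<beta> (a, True) - \<beta> (a, False)) - (\<beta> (k, True) - \<beta> (k, False))"
    using a k by (simp add: sum.delta)
  finally show ?thesis by (simp add: j)
qed

lemma sum_ej:
  assumes "finite H"
  shows "(\<Sum>c\<in>H. ej k j c) = (if j \<in> H then 1 else 0) - (if (k, True) \<in> H then 1 else 0)"
  using assms by (simp add: ej_def sum_subtractf sum.delta)

lemma pi_of_upd:
  assumes "j \<in> cells k - {(k, True)}"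
  shows "pi_of k (\<theta>(Inl j := y)) = (\<lambda>c. pi_of k \<theta> c + (y - \<theta> (Inl j)) * ej k j c)"
proof
  fix c
  have s: "(\<Sum>d\<in>cells k - {(k, True)}. if d = j then y else \<theta> (Inl d)) =
        (\<Sum>d\<in>cells k - {(k, True)}. \<theta> (Inl d) + (if d = j then y - \<theta> (Inl j) else 0))"
    by (rule sum.cong) auto
  have s2: "(\<Sum>d\<in>cells k - {(k, True)}. \<theta> (Inl d) + (if d = j then y - \<theta> (Inl j) else 0))
     = (\<Sum>d\<in>cells k - {(k, True)}. \<theta> (Inl d)) + (y - \<theta> (Inl j))"
    using assms by (simp add: sum.distrib sum.delta)
  show "pi_of k (\<theta>(Inl j := y)) c = pi_of k \<theta> c + (y - \<theta> (Inl j)) * ej k j c"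
    using assms by (auto simp: pi_of_def ej_def s s2)
qed

definition Aj where
  "Aj k H cs j = ej k j cs * Mf k (ej k j) (ind H) - (\<Sum>c\<in>H. ej k j c) * Mf k (ej k j) (ind {cs})"

definition Bj where
  "Bj k \<rho> H cs \<pi> j = \<pi> cs * Mf k (ej k j) (ind H) + ej k j cs * Mf k \<pi> (ind H)
     - (\<Sum>c\<in>H. ej k j c) * Mf k \<pi> (ind {cs}) + (\<rho> - (\<Sum>c\<in>H. \<pi> c)) * Mf k (ej k j) (ind {cs})"

lemma mask_cover:
  assumes k: "k \<ge> 2" and H: "H \<subseteq> cells k" and cs: "cs \<in> cells k" "cs \<notin> H"
    and r0: "0 < \<rho> - (\<Sum>c\<in>H. \<pi> c)" and r1: "\<rho> - (\<Sum>c\<in>H. \<pi> c) < \<pi> cs"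
  shows "\<exists>j\<in>cells k - {(k, True)}. Aj k H cs j \<noteq> 0 \<or> Bj k \<rho> H cs \<pi> j \<noteq> 0"
proof (rule ccontr)
  assume "\<not> ?thesis"
  then have Z: "\<And>j. j \<in> cells k - {(k, True)} \<Longrightarrow> Aj k H cs j = 0 \<and> Bj k \<rho> H cs \<pi> j = 0" by auto
  have finH: "finite H" by (rule finite_subset[OF H]) simp
  define r where "r = \<rho> - (\<Sum>c\<in>H. \<pi> c)"
  define p where "p = \<pi> cs"
  define W where "W = Mf k \<pi> (ind H)"
  define Q where "Q = Mf k \<pi> (ind {cs})"
  have r0': "0 < r" and r1': "r < p" using r0 r1 by (auto simp: r_def p_def)
  have AB: "Aj k H cs j = ej k j cs * ((ind H (fst j, True) - ind H (fst j, False)) - (ind H (k, True) - ind H (k, False)))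
      - ((if j \<in> H then 1 else 0) - (if (k, True) \<in> H then 1 else 0)) * ((ind {cs} (fst j, True) - ind {cs} (fst j, False)) - (ind {cs} (k, True) - ind {cs} (k, False)))"
    "Bj k \<rho> H cs \<pi> j = p * ((ind H (fst j, True) - ind H (fst j, False)) - (ind H (k, True) - ind H (k, False))) + ej k j cs * W
      - ((if j \<in> H then 1 else 0) - (if (k, True) \<in> H then 1 else 0)) * Q
      + r * ((ind {cs} (fst j, True) - ind {cs} (fst j, False)) - (ind {cs} (k, True) - ind {cs} (k, False)))"
    if "j \<in> cells k" for j
    using that finH by (simp_all add: Aj_def Bj_def Mf_ej sum_ej r_def p_def W_def Q_def)
  obtain xs bs where csx: "cs = (xs, bs)" by (cases cs)
  have xs: "1 \<le> xs" "xs \<le> k" using cs csx by (auto simp: cells_def)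
  show False
  proof (cases "xs = k")
    case False
    have jc: "(xs, \<not> bs) \<in> cells k - {(k, True)}" using xs False by (auto simp: cells_def)
    from Z[OF jc] AB[of "(xs, \<not> bs)"] jc have "Aj k H cs (xs, \<not> bs) = 0" "Bj k \<rho> H cs \<pi> (xs, \<not> bs) = 0" by auto
    then show False using AB[of "(xs, \<not> bs)"] jc r0' r1' False cs
      by (cases bs; cases "(k,True) \<in> H"; cases "(k,False) \<in> H"; cases "(xs,True) \<in> H"; cases "(xs,False) \<in> H")
         (auto simp: ind_def ej_def csx)
  next
    case True
    have c1: "(1, b) \<in> cells k - {(k, True)}" for b using k by (auto simp: cells_def)
    have c2: "(k, False) \<in> cells k - {(k, True)}" using k by (auto simp: cells_def)
    have k1: "k \<noteq> 1" using k by auto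
    note Z1 = Z[OF c1[of True]] Z[OF c1[of False]] Z[OF c2]
    note AB1 = AB[of "(1,True)"] AB[of "(1,False)"] AB[of "(k,False)"]
    show False using Z1 AB1 c1 c2 r0' r1' True k1 cs
      by (cases bs; cases "(k,True) \<in> H"; cases "(k,False) \<in> H"; cases "(1,True) \<in> H"; cases "(1,False) \<in> H")
         (auto simp: ind_def ej_def csx)
  qed
qed

lemma exchange:
  assumes pos: "\<forall>c\<in>cells k. 0 < \<pi> c" and opt: "optimal k \<pi> \<gamma> \<rho> \<alpha>"
    and c: "c \<in> cells k" and d: "d \<in> cells k" and cd: "c \<noteq> d" and g: "\<gamma> d < \<gamma> c"
    and ac: "\<alpha> c < 1" and ad: "0 < \<alpha> d"
  shows False
proof -
  have feas: "feasible k \<pi> \<rho> \<alpha>" and best: "\<And>\<beta>. feasible k \<pi> \<rho> \<beta> \<Longrightarrow> welfare k \<pi> \<gamma> \<beta> \<le> welfare k \<pi> \<gamma> \<alpha>"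
    using opt by (auto simp: optimal_def)
  have pc: "0 < \<pi> c" and pd: "0 < \<pi> d" using pos c d by auto
  define \<epsilon> where "\<epsilon> = min ((1 - \<alpha> c) * \<pi> c) (\<alpha> d * \<pi> d)"
  have e0: "0 < \<epsilon>" using ac ad pc pd by (simp add: \<epsilon>_def)
  have e1: "\<epsilon> / \<pi> c \<le> 1 - \<alpha> c" using pc by (simp add: \<epsilon>_def divide_le_eq)
  have e2: "\<epsilon> / \<pi> d \<le> \<alpha> d" using pd by (simp add: \<epsilon>_def divide_le_eq)
  define \<beta> where "\<beta> x = \<alpha> x + (if x = c then \<epsilon> / \<pi> c else 0) - (if x = d then \<epsilon> / \<pi> d else 0)" for x
  have sc: "(\<Sum>x\<in>cells k. (if x = c then \<epsilon> / \<pi> c else 0) * f x) = \<epsilon> / \<pi> c * f c" for f :: "_ \<Rightarrow> real"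
  proof -
    have "(\<Sum>x\<in>cells k. (if x = c then \<epsilon> / \<pi> c else 0) * f x) = (\<Sum>x\<in>cells k. (if x = c then \<epsilon> / \<pi> c * f c else 0))"
      by (rule sum.cong) auto
    then show ?thesis using c by (simp add: sum.delta)
  qed
  have sd: "(\<Sum>x\<in>cells k. (if x = d then \<epsilon> / \<pi> d else 0) * f x) = \<epsilon> / \<pi> d * f d" for f :: "_ \<Rightarrow> real"
  proof -
    have "(\<Sum>x\<in>cells k. (if x = d then \<epsilon> / \<pi> d else 0) * f x) = (\<Sum>x\<in>cells k. (if x = d then \<epsilon> / \<pi> d * f d else 0))"
      by (rule sum.cong) auto
    then show ?thesis using d by (simp add: sum.delta)
  qed
  have bsum: "(\<Sum>x\<in>cells k. \<beta> x * f x) = (\<Sum>x\<in>cells k. \<alpha> x * f x) + \<epsilon> / \<pi> c * f c - \<epsilon> / \<pi> d * f d" for f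
  proof -
    have "(\<Sum>x\<in>cells k. \<beta> x * f x) = (\<Sum>x\<in>cells k. \<alpha> x * f x + (if x = c then \<epsilon> / \<pi> c else 0) * f x - (if x = d then \<epsilon> / \<pi> d else 0) * f x)"
      by (rule sum.cong) (auto simp: \<beta>_def algebra_simps)
    also have "\<dots> = (\<Sum>x\<in>cells k. \<alpha> x * f x) + (\<Sum>x\<in>cells k. (if x = c then \<epsilon> / \<pi> c else 0) * f x) - (\<Sum>x\<in>cells k. (if x = d then \<epsilon> / \<pi> d else 0) * f x)"
      by (simp add: sum.distrib sum_subtractf)
    finally show ?thesis by (simp add: sc sd)
  qed
  have "feasible k \<pi> \<rho> \<beta>"
  proof -
    have "\<forall>x\<in>cells k. 0 \<le> \<beta> x \<and> \<beta> x \<le> 1"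
    proof
      fix x assume x: "x \<in> cells k"
      have "0 \<le> \<alpha> x" "\<alpha> x \<le> 1" using feas x by (auto simp: feasible_def)
      moreover have "0 \<le> \<epsilon> / \<pi> c" "0 \<le> \<epsilon> / \<pi> d" using e0 pc pd by auto
      ultimately show "0 \<le> \<beta> x \<and> \<beta> x \<le> 1" using e1 e2 cd by (auto simp: \<beta>_def)
    qed
    moreover have "(\<Sum>x\<in>cells k. \<beta> x * \<pi> x) = \<rho>"
      using bsum[of \<pi>] feas pc pd by (simp add: feasible_def)
    ultimately show ?thesis by (simp add: feasible_def)
  qed
  then have "welfare k \<pi> \<gamma> \<beta> \<le> welfare k \<pi> \<gamma> \<alpha>" by (rule best)
  moreover have "welfare k \<pi> \<gamma> \<beta> = welfare k \<pi> \<gamma> \<alpha> + \<epsilon> * (\<gamma> c - \<gamma> d)"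
  proof -
    have "welfare k \<pi> \<gamma> \<beta> = (\<Sum>x\<in>cells k. \<beta> x * (\<gamma> x * \<pi> x))"
      unfolding welfare_def by (rule sum.cong) (auto simp: algebra_simps)
    also have "\<dots> = (\<Sum>x\<in>cells k. \<alpha> x * (\<gamma> x * \<pi> x)) + \<epsilon> * \<gamma> c - \<epsilon> * \<gamma> d"
      using bsum[of "\<lambda>x. \<gamma> x * \<pi> x"] pc pd by simp
    also have "(\<Sum>x\<in>cells k. \<alpha> x * (\<gamma> x * \<pi> x)) = welfare k \<pi> \<gamma> \<alpha>"
      unfolding welfare_def by (rule sum.cong) (auto simp: algebra_simps)
    finally show ?thesis by (simp add: algebra_simps)
  qed
  moreover have "0 < \<epsilon> * (\<gamma> c - \<gamma> d)" using e0 g by simp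
  ultimately show False by simp
qed

lemma core:
  assumes pos: "\<forall>c\<in>cells k. 0 < \<pi> c" and opt: "optimal k \<pi> \<gamma> \<rho> \<alpha>"
    and inj: "inj_on \<gamma> (cells k)" and noS: "\<forall>S\<subseteq>cells k. (\<Sum>c\<in>S. \<pi> c) \<noteq> \<rho>"
  shows "\<exists>cs\<in>cells k. 0 < \<alpha> cs \<and> \<alpha> cs < 1 \<and> (\<forall>c\<in>cells k. c \<noteq> cs \<longrightarrow> \<alpha> c = 0 \<or> \<alpha> c = 1)"
proof -
  have feas: "feasible k \<pi> \<rho> \<alpha>" using opt by (auto simp: optimal_def)
  have rng: "\<And>c. c \<in> cells k \<Longrightarrow> 0 \<le> \<alpha> c \<and> \<alpha> c \<le> 1" using feas by (auto simp: feasible_def)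
  have two: False if "c \<in> cells k" "d \<in> cells k" "c \<noteq> d" "0 < \<alpha> c" "\<alpha> c < 1" "0 < \<alpha> d" "\<alpha> d < 1" for c d
  proof -
    have "\<gamma> c \<noteq> \<gamma> d" using inj that by (auto dest: inj_onD)
    show False
    proof (cases "\<gamma> d < \<gamma> c")
      case True
      show ?thesis by (rule exchange[OF pos opt that(1,2,3) True that(5,6)])
    next
      case False
      then have "\<gamma> c < \<gamma> d" using \<open>\<gamma> c \<noteq> \<gamma> d\<close> by auto
      then show ?thesis by (rule exchange[OF pos opt that(2,1) not_sym[OF that(3)] _ that(7) that(4)])
    qed
  qed
  have "\<exists>cs\<in>cells k. 0 < \<alpha> cs \<and> \<alpha> cs < 1"
  proof (rule ccontr)
    assume "\<not> ?thesis"
    then have b: "\<And>c. c \<in> cells k \<Longrightarrow> \<alpha> c = 0 \<or> \<alpha> c = 1" using rng by force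
    define S where "S = {c\<in>cells k. \<alpha> c = 1}"
    have "(\<Sum>c\<in>S. \<pi> c) = (\<Sum>c\<in>cells k. if \<alpha> c = 1 then \<pi> c else 0)"
      unfolding S_def by (rule sum.inter_filter) simp
    also have "\<dots> = (\<Sum>c\<in>cells k. \<alpha> c * \<pi> c)"
      by (rule sum.cong) (use b in auto)
    also have "\<dots> = \<rho>" using feas by (simp add: feasible_def)
    finally show False using noS S_def by auto
  qed
  then obtain cs where cs: "cs \<in> cells k" "0 < \<alpha> cs" "\<alpha> cs < 1" by auto
  have "\<forall>c\<in>cells k. c \<noteq> cs \<longrightarrow> \<alpha> c = 0 \<or> \<alpha> c = 1"
  proof (intro ballI impI)
    fix c assume c: "c \<in> cells k" "c \<noteq> cs"
    show "\<alpha> c = 0 \<or> \<alpha> c = 1"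
    proof (rule ccontr)
      assume "\<not> (\<alpha> c = 0 \<or> \<alpha> c = 1)"
      then have "0 < \<alpha> c" "\<alpha> c < 1" using rng[OF c(1)] by auto
      then show False using two[OF c(1) cs(1) c(2) _ _ cs(2) cs(3)] by simp
    qed
  qed
  then show ?thesis using cs by blast
qed

lemma finite_param_index[simp]: "finite (param_index k)"
  by (simp add: param_index_def)

lemma space_pl: "space (param_lebesgue k) = PiE (param_index k) (\<lambda>_. UNIV)"
  by (simp add: param_lebesgue_def space_PiM)

lemma comp_meas:
  assumes "i \<in> param_index k"
  shows "(\<lambda>\<theta>. \<theta> i) \<in> borel_measurable (param_lebesgue k)"
  unfolding param_lebesgue_def using measurable_component_singleton[OF assms, of "\<lambda>_. lborel"] by simp

lemma pi_of_meas[measurable]: "(\<lambda>\<theta>. pi_of k \<theta> c) \<in> borel_measurable (param_lebesgue k)"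
proof (cases "c = (k, True)")
  case True
  have "(\<lambda>\<theta>. 1 - (\<Sum>d\<in>cells k - {(k, True)}. \<theta> (Inl d))) \<in> borel_measurable (param_lebesgue k)"
    by (intro borel_measurable_diff borel_measurable_const borel_measurable_sum comp_meas)
       (auto simp: param_index_def)
  then show ?thesis using True by (simp add: pi_of_def)
next
  case False
  show ?thesis
  proof (cases "c \<in> cells k")
    case True
    then have "Inl c \<in> param_index k" using False by (auto simp: param_index_def)
    from comp_meas[OF this] show ?thesis using False by (simp add: pi_of_def)
  next
    case nc: False
    then have "Inl c \<notin> param_index k" by (auto simp: param_index_def)
    then have "\<And>\<theta>. \<theta> \<in> space (param_lebesgue k) \<Longrightarrow> pi_of k \<theta> c = undefined"
      using False by (auto simp: pi_of_def space_pl PiE_def extensional_def)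
    then show ?thesis by (subst measurable_cong[where g="\<lambda>_. undefined"]) auto
  qed
qed

definition piece :: "nat \<Rightarrow> (((nat \<times> bool) + (nat \<times> bool) \<Rightarrow> real) \<Rightarrow> real) \<Rightarrow> (nat \<times> bool) + (nat \<times> bool) \<Rightarrow> _" where
  "piece k f i = {\<theta>\<in>space (param_lebesgue k). f \<theta> = 0 \<and> (f (\<theta>(i:=\<theta> i+1)) \<noteq> 0 \<or> f (\<theta>(i:=\<theta> i + -1)) \<noteq> 0)}"

lemma piece_null':
  assumes "i \<in> param_index k" "f \<in> borel_measurable (param_lebesgue k)"
    and "\<And>\<theta>. \<theta> \<in> space (param_lebesgue k) \<Longrightarrow> \<exists>A B C. \<forall>y. f (\<theta>(i:=y)) = A*y^2 + B*y + C"
  shows "piece k f i \<in> null_sets (param_lebesgue k)"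
  using piece_null[of "param_index k" i f] assms unfolding piece_def param_lebesgue_def by simp

lemma quad_shift:
  fixes g :: "real \<Rightarrow> real"
  assumes "\<And>y. g y = C + (y - t) * B + (y - t)^2 * A"
  shows "\<exists>A B C. \<forall>y. g y = A*y^2 + B*y + C"
  by (rule exI[of _ A], rule exI[of _ "B - 2*A*t"], rule exI[of _ "C - B*t + A*t^2"])
     (simp add: assms power2_eq_square algebra_simps)

lemma null_I:
  assumes "c \<in> cells k" "d \<in> cells k" "c \<noteq> d"
  shows "piece k (\<lambda>\<theta>. \<theta> (Inr c) - \<theta> (Inr d)) (Inr c) \<in> null_sets (param_lebesgue k)"
proof (rule piece_null')
  show "Inr c \<in> param_index k" using assms by (simp add: param_index_def)
  show "(\<lambda>\<theta>. \<theta> (Inr c) - \<theta> (Inr d)) \<in> borel_measurable (param_lebesgue k)"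
    using assms by (intro borel_measurable_diff comp_meas) (auto simp: param_index_def)
  fix \<theta> :: "(nat \<times> bool) + (nat \<times> bool) \<Rightarrow> real"
  show "\<exists>A B C. \<forall>y. (\<theta>(Inr c := y)) (Inr c) - (\<theta>(Inr c := y)) (Inr d) = A*y^2 + B*y + C"
    using assms by (intro exI[of _ 0] exI[of _ 1] exI[of _ "- \<theta> (Inr d)"]) auto
qed

lemma null_S:
  assumes "j \<in> cells k - {(k, True)}"
  shows "piece k (\<lambda>\<theta>. (\<Sum>c\<in>S. pi_of k \<theta> c) - \<rho>) (Inl j) \<in> null_sets (param_lebesgue k)"
proof (rule piece_null')
  show "Inl j \<in> param_index k" using assms by (simp add: param_index_def)
  show "(\<lambda>\<theta>. (\<Sum>c\<in>S. pi_of k \<theta> c) - \<rho>) \<in> borel_measurable (param_lebesgue k)"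
    by measurable
  fix \<theta> :: "(nat \<times> bool) + (nat \<times> bool) \<Rightarrow> real"
  show "\<exists>A B C. \<forall>y. (\<Sum>c\<in>S. pi_of k (\<theta>(Inl j := y)) c) - \<rho> = A*y^2 + B*y + C"
    by (rule quad_shift[where t = "\<theta> (Inl j)" and A = 0 and B = "\<Sum>c\<in>S. ej k j c" and C = "(\<Sum>c\<in>S. pi_of k \<theta> c) - \<rho>"])
       (unfold pi_of_upd[OF assms] sum_shift, simp add: algebra_simps)
qed

lemma Gf_meas[measurable]: "(\<lambda>\<theta>. Gf k \<rho> H cs (pi_of k \<theta>)) \<in> borel_measurable (param_lebesgue k)"
  unfolding Gf_def Mf_def ind_def by measurable

lemma null_G:
  assumes "j \<in> cells k - {(k, True)}"
  shows "piece k (\<lambda>\<theta>. Gf k \<rho> H cs (pi_of k \<theta>)) (Inl j) \<in> null_sets (param_lebesgue k)"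
proof (rule piece_null')
  show "Inl j \<in> param_index k" using assms by (simp add: param_index_def)
  show "(\<lambda>\<theta>. Gf k \<rho> H cs (pi_of k \<theta>)) \<in> borel_measurable (param_lebesgue k)"
    by measurable
  fix \<theta> :: "(nat \<times> bool) + (nat \<times> bool) \<Rightarrow> real"
  show "\<exists>A B C. \<forall>y. Gf k \<rho> H cs (pi_of k (\<theta>(Inl j := y))) = A*y^2 + B*y + C"
    by (rule quad_shift[where t = "\<theta> (Inl j)" and A = "Aj k H cs j" and B = "Bj k \<rho> H cs (pi_of k \<theta>) j"
          and C = "Gf k \<rho> H cs (pi_of k \<theta>)"])
       (unfold pi_of_upd[OF assms] G_shift, simp add: Aj_def Bj_def algebra_simps)
qed

definition N1 :: "nat \<Rightarrow> real \<Rightarrow> _" where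
  "N1 k \<rho> = (\<Union>cd\<in>{(c,d). c\<in>cells k \<and> d\<in>cells k \<and> c\<noteq>d}. piece k (\<lambda>\<theta>. \<theta> (Inr (fst cd)) - \<theta> (Inr (snd cd))) (Inr (fst cd)))
     \<union> (\<Union>Sj\<in>Pow (cells k) \<times> (cells k - {(k,True)}). piece k (\<lambda>\<theta>. (\<Sum>c\<in>fst Sj. pi_of k \<theta> c) - \<rho>) (Inl (snd Sj)))"

definition N2 :: "nat \<Rightarrow> real \<Rightarrow> _" where
  "N2 k \<rho> = N1 k \<rho> \<union> (\<Union>x\<in>Pow (cells k) \<times> cells k \<times> (cells k - {(k,True)}).
       piece k (\<lambda>\<theta>. Gf k \<rho> (fst x) (fst (snd x)) (pi_of k \<theta>)) (Inl (snd (snd x))))"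

lemma N1_null: "N1 k \<rho> \<in> null_sets (param_lebesgue k)"
  unfolding N1_def
proof (rule null_sets.Un)
  show "(\<Union>cd\<in>{(c,d). c\<in>cells k \<and> d\<in>cells k \<and> c\<noteq>d}. piece k (\<lambda>\<theta>. \<theta> (Inr (fst cd)) - \<theta> (Inr (snd cd))) (Inr (fst cd))) \<in> null_sets (param_lebesgue k)"
  proof (rule null_sets_UN')
    have "{(c,d). c\<in>cells k \<and> d\<in>cells k \<and> c\<noteq>d} \<subseteq> cells k \<times> cells k" by auto
    then show "countable {(c,d). c\<in>cells k \<and> d\<in>cells k \<and> c\<noteq>d}"
      by (intro countable_finite, rule finite_subset) simp_all
  next
    fix cd assume "cd \<in> {(c,d). c\<in>cells k \<and> d\<in>cells k \<and> c\<noteq>d}"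
    then show "piece k (\<lambda>\<theta>. \<theta> (Inr (fst cd)) - \<theta> (Inr (snd cd))) (Inr (fst cd)) \<in> null_sets (param_lebesgue k)"
      by (cases cd) (simp add: null_I)
  qed
  show "(\<Union>Sj\<in>Pow (cells k) \<times> (cells k - {(k,True)}). piece k (\<lambda>\<theta>. (\<Sum>c\<in>fst Sj. pi_of k \<theta> c) - \<rho>) (Inl (snd Sj))) \<in> null_sets (param_lebesgue k)"
  proof (rule null_sets_UN')
    fix Sj assume "Sj \<in> Pow (cells k) \<times> (cells k - {(k,True)})"
    then show "piece k (\<lambda>\<theta>. (\<Sum>c\<in>fst Sj. pi_of k \<theta> c) - \<rho>) (Inl (snd Sj)) \<in> null_sets (param_lebesgue k)"
      by (intro null_S) auto
  qed (rule countable_finite, simp)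
qed

lemma N2_null: "N2 k \<rho> \<in> null_sets (param_lebesgue k)"
  unfolding N2_def
proof (intro null_sets.Un N1_null null_sets_UN')
  fix x assume "x \<in> Pow (cells k) \<times> cells k \<times> (cells k - {(k,True)})"
  then show "piece k (\<lambda>\<theta>. Gf k \<rho> (fst x) (fst (snd x)) (pi_of k \<theta>)) (Inl (snd (snd x))) \<in> null_sets (param_lebesgue k)"
    by (intro null_G) auto
qed (rule countable_finite, simp)

lemma cover1:
  assumes th: "\<theta> \<in> space (param_lebesgue k)" and T: "Theta k (pi_of k \<theta>) (gamma_of \<theta>)"
    and r: "0 < \<rho>" "\<rho> < 1" and nN: "\<theta> \<notin> N1 k \<rho>"
  shows "inj_on (gamma_of \<theta>) (cells k) \<and> (\<forall>S\<subseteq>cells k. (\<Sum>c\<in>S. pi_of k \<theta> c) \<noteq> \<rho>)"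
proof
  show "inj_on (gamma_of \<theta>) (cells k)"
  proof (rule inj_onI, rule ccontr)
    fix c d assume cd: "c \<in> cells k" "d \<in> cells k" "gamma_of \<theta> c = gamma_of \<theta> d" "c \<noteq> d"
    have "\<theta> \<in> piece k (\<lambda>\<theta>. \<theta> (Inr c) - \<theta> (Inr d)) (Inr c)"
      using th cd by (auto simp: piece_def gamma_of_def)
    then have "\<theta> \<in> N1 k \<rho>" unfolding N1_def
      by (intro UnI1 UN_I[of "(c,d)"]) (use cd in auto)
    then show False using nN by blast
  qed
  show "\<forall>S\<subseteq>cells k. (\<Sum>c\<in>S. pi_of k \<theta> c) \<noteq> \<rho>"
  proof (intro allI impI notI)
    fix S assume S: "S \<subseteq> cells k" and eq: "(\<Sum>c\<in>S. pi_of k \<theta> c) = \<rho>"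
    have one: "(\<Sum>c\<in>cells k. pi_of k \<theta> c) = 1" using T by (simp add: Theta_def)
    have "S \<noteq> {}" using eq r by auto
    have "S \<noteq> cells k" using eq r one by auto
    have "\<exists>j\<in>cells k - {(k,True)}. (if j \<in> S then 1 else 0) - (if (k, True) \<in> S then 1 else 0) \<noteq> (0::real)"
    proof (cases "(k,True) \<in> S")
      case True
      then obtain j where "j \<in> cells k" "j \<notin> S" using \<open>S \<noteq> cells k\<close> S by auto
      then show ?thesis using True by (intro bexI[of _ j]) auto
    next
      case False
      then obtain j where "j \<in> S" using \<open>S \<noteq> {}\<close> by auto
      then show ?thesis using False S by (intro bexI[of _ j]) auto
    qed
    then obtain j where j: "j \<in> cells k - {(k,True)}" and jne: "(if j \<in> S then 1 else 0) - (if (k, True) \<in> S then 1 else 0) \<noteq> (0::real)"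
      by blast
    have finS: "finite S" by (rule finite_subset[OF S]) simp
    have "(\<Sum>c\<in>S. pi_of k (\<theta>(Inl j := \<theta> (Inl j) + 1)) c) - \<rho> = (\<Sum>c\<in>S. ej k j c)"
      unfolding pi_of_upd[OF j] using eq by (simp add: sum.distrib)
    also have "\<dots> \<noteq> 0" using jne by (simp add: sum_ej[OF finS])
    finally have "\<theta> \<in> piece k (\<lambda>\<theta>. (\<Sum>c\<in>S. pi_of k \<theta> c) - \<rho>) (Inl j)"
      using th eq by (auto simp: piece_def)
    then have "\<theta> \<in> N1 k \<rho>" unfolding N1_def
      by (intro UnI2 UN_I[of "(S,j)"]) (use S j in auto)
    then show False using nN by blast
  qed
qed

lemma Mf_lin_beta: "Mf k \<pi> (\<lambda>c. \<beta> c + s * e c) = Mf k \<pi> \<beta> + s * Mf k \<pi> e"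
  unfolding Mf_def sum_distrib_left sum.distrib[symmetric] by (rule sum.cong) (simp_all add: algebra_simps)

lemma fair_part:
  assumes k: "k \<ge> 2" and r: "0 < \<rho>" "\<rho> < 1"
  shows "{\<theta>\<in>space (param_lebesgue k). Theta k (pi_of k \<theta>) (gamma_of \<theta>) \<and>
               (\<exists>\<alpha>. optimal k (pi_of k \<theta>) (gamma_of \<theta>) \<rho> \<alpha> \<and> fair k \<alpha>)} \<subseteq> N1 k \<rho>"
proof (rule subsetI, rule ccontr)
  fix \<theta> assume "\<theta> \<in> {\<theta>\<in>space (param_lebesgue k). Theta k (pi_of k \<theta>) (gamma_of \<theta>) \<and>
               (\<exists>\<alpha>. optimal k (pi_of k \<theta>) (gamma_of \<theta>) \<rho> \<alpha> \<and> fair k \<alpha>)}" and nN: "\<theta> \<notin> N1 k \<rho>"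
  then obtain \<alpha> where th: "\<theta> \<in> space (param_lebesgue k)" and T: "Theta k (pi_of k \<theta>) (gamma_of \<theta>)"
    and opt: "optimal k (pi_of k \<theta>) (gamma_of \<theta>) \<rho> \<alpha>" and fa: "fair k \<alpha>" by auto
  have pos: "\<forall>c\<in>cells k. 0 < pi_of k \<theta> c" using T by (simp add: Theta_def)
  from cover1[OF th T r nN] have inj: "inj_on (gamma_of \<theta>) (cells k)"
    and noS: "\<forall>S\<subseteq>cells k. (\<Sum>c\<in>S. pi_of k \<theta> c) \<noteq> \<rho>" by auto
  obtain cs where cs: "cs \<in> cells k" "0 < \<alpha> cs" "\<alpha> cs < 1"
    and oth: "\<forall>c\<in>cells k. c \<noteq> cs \<longrightarrow> \<alpha> c = 0 \<or> \<alpha> c = 1"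
    using core[OF pos opt inj noS] by blast
  obtain x b where csx: "cs = (x, b)" by (cases cs)
  have x: "x \<in> {1..k}" using cs csx by (auto simp: cells_def)
  have pc: "(x, \<not> b) \<in> cells k" "(x, \<not> b) \<noteq> cs" using x csx by (auto simp: cells_def)
  have "\<alpha> (x, \<not> b) = \<alpha> cs" using fa x csx by (cases b) (auto simp: fair_def)
  then show False using oth pc cs by force
qed

lemma mask_part:
  assumes k: "k \<ge> 2" and r: "0 < \<rho>" "\<rho> < 1"
  shows "{\<theta>\<in>space (param_lebesgue k). Theta k (pi_of k \<theta>) (gamma_of \<theta>) \<and>
               (\<exists>\<alpha>. optimal k (pi_of k \<theta>) (gamma_of \<theta>) \<rho> \<alpha> \<and> masked k (pi_of k \<theta>) \<alpha>)} \<subseteq> N2 k \<rho>"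
proof (rule subsetI, rule ccontr)
  fix \<theta> assume "\<theta> \<in> {\<theta>\<in>space (param_lebesgue k). Theta k (pi_of k \<theta>) (gamma_of \<theta>) \<and>
               (\<exists>\<alpha>. optimal k (pi_of k \<theta>) (gamma_of \<theta>) \<rho> \<alpha> \<and> masked k (pi_of k \<theta>) \<alpha>)}" and nN: "\<theta> \<notin> N2 k \<rho>"
  then obtain \<alpha> where th: "\<theta> \<in> space (param_lebesgue k)" and T: "Theta k (pi_of k \<theta>) (gamma_of \<theta>)"
    and opt: "optimal k (pi_of k \<theta>) (gamma_of \<theta>) \<rho> \<alpha>" and ma: "masked k (pi_of k \<theta>) \<alpha>" by auto
  define \<pi> where "\<pi> = pi_of k \<theta>"
  have pos: "\<forall>c\<in>cells k. 0 < \<pi> c" using T by (simp add: Theta_def \<pi>_def)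
  have nN1: "\<theta> \<notin> N1 k \<rho>" using nN by (simp add: N2_def)
  from cover1[OF th T r nN1] have inj: "inj_on (gamma_of \<theta>) (cells k)"
    and noS: "\<forall>S\<subseteq>cells k. (\<Sum>c\<in>S. \<pi> c) \<noteq> \<rho>" by (auto simp: \<pi>_def)
  obtain cs where cs: "cs \<in> cells k" "0 < \<alpha> cs" "\<alpha> cs < 1"
    and oth: "\<forall>c\<in>cells k. c \<noteq> cs \<longrightarrow> \<alpha> c = 0 \<or> \<alpha> c = 1"
    using core[OF pos[unfolded \<pi>_def] opt inj noS[unfolded \<pi>_def]] by blast
  define H where "H = {c\<in>cells k. \<alpha> c = 1}"
  define t where "t = \<alpha> cs"
  define p where "p = \<pi> cs"
  have HC: "H \<subseteq> cells k" "cs \<notin> H" using cs by (auto simp: H_def)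
  have p0: "0 < p" using pos cs by (simp add: p_def)
  have aH: "\<alpha> c = ind H c + t * ind {cs} c" if "c \<in> cells k" for c
    using that oth cs by (cases "c = cs") (auto simp: ind_def H_def t_def)
  have feas: "(\<Sum>c\<in>cells k. \<alpha> c * \<pi> c) = \<rho>" using opt by (simp add: optimal_def feasible_def \<pi>_def)
  have s1: "(\<Sum>c\<in>cells k. ind H c * \<pi> c) = (\<Sum>c\<in>H. \<pi> c)"
  proof -
    have "(\<Sum>c\<in>H. \<pi> c) = (\<Sum>c\<in>cells k. if \<alpha> c = 1 then \<pi> c else 0)"
      unfolding H_def by (rule sum.inter_filter) simp
    also have "\<dots> = (\<Sum>c\<in>cells k. ind H c * \<pi> c)"
      by (rule sum.cong) (auto simp: ind_def H_def)
    finally show ?thesis by simp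
  qed
  have s2: "(\<Sum>c\<in>cells k. ind {cs} c * \<pi> c) = p"
  proof -
    have "(\<Sum>c\<in>cells k. ind {cs} c * \<pi> c) = (\<Sum>c\<in>cells k. if c = cs then \<pi> cs else 0)"
      by (rule sum.cong) (auto simp: ind_def)
    then show ?thesis using cs by (simp add: p_def)
  qed
  have "(\<Sum>c\<in>cells k. \<alpha> c * \<pi> c) = (\<Sum>c\<in>cells k. ind H c * \<pi> c + t * (ind {cs} c * \<pi> c))"
    by (rule sum.cong) (auto simp: aH algebra_simps)
  also have "\<dots> = (\<Sum>c\<in>H. \<pi> c) + t * p"
    by (simp add: sum.distrib s1 s2 sum_distrib_left[symmetric])
  finally have rr: "\<rho> - (\<Sum>c\<in>H. \<pi> c) = t * p" using feas by simp
  have r0: "0 < \<rho> - (\<Sum>c\<in>H. \<pi> c)" using rr cs p0 by (simp add: t_def)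
  have r1: "\<rho> - (\<Sum>c\<in>H. \<pi> c) < \<pi> cs" using rr cs p0 by (simp add: t_def p_def)
  have "Mf k \<pi> \<alpha> = Mf k \<pi> (\<lambda>c. ind H c + t * ind {cs} c)"
    unfolding Mf_def by (rule sum.cong) (auto simp: aH cells_def)
  also have "\<dots> = Mf k \<pi> (ind H) + t * Mf k \<pi> (ind {cs})" by (rule Mf_lin_beta)
  finally have "Mf k \<pi> (ind H) + t * Mf k \<pi> (ind {cs}) = 0"
    using ma by (simp add: masked_def Mf_def \<pi>_def)
  then have G0: "Gf k \<rho> H cs \<pi> = 0"
    unfolding Gf_def rr p_def[symmetric] by (simp add: algebra_simps)
    (metis mult.commute mult_zero_left distrib_left)
  obtain j where j: "j \<in> cells k - {(k, True)}" and AB: "Aj k H cs j \<noteq> 0 \<or> Bj k \<rho> H cs \<pi> j \<noteq> 0"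
    using mask_cover[OF k HC(1) cs(1) HC(2) r0 r1] by blast
  have up: "Gf k \<rho> H cs (pi_of k (\<theta>(Inl j := \<theta> (Inl j) + d))) = d * Bj k \<rho> H cs \<pi> j + d^2 * Aj k H cs j" for d
    unfolding pi_of_upd[OF j] G_shift \<pi>_def[symmetric] using G0 by (simp add: Aj_def Bj_def)
  have "Gf k \<rho> H cs (pi_of k (\<theta>(Inl j := \<theta> (Inl j) + 1))) \<noteq> 0 \<or> Gf k \<rho> H cs (pi_of k (\<theta>(Inl j := \<theta> (Inl j) + -1))) \<noteq> 0"
    using AB unfolding up by auto
  then have "\<theta> \<in> piece k (\<lambda>\<theta>. Gf k \<rho> H cs (pi_of k \<theta>)) (Inl j)"
    using th G0 by (simp add: piece_def \<pi>_def)
  then have "\<theta> \<in> N2 k \<rho>" unfolding N2_def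
    by (intro UnI2 UN_I[of "(H, cs, j)"]) (use HC cs j in auto)
  then show False using nN by blast
qed

theorem mainTheorem7:
  fixes k :: nat and \<rho> :: real
  assumes "k \<ge> 2" and "0 < \<rho>" and "\<rho> < 1"
  shows "(\<exists>N\<in>null_sets (param_lebesgue k).
            {\<theta>\<in>space (param_lebesgue k). Theta k (pi_of k \<theta>) (gamma_of \<theta>) \<and>
               (\<exists>\<alpha>. optimal k (pi_of k \<theta>) (gamma_of \<theta>) \<rho> \<alpha> \<and> fair k \<alpha>)} \<subseteq> N)
       \<and> (\<exists>N\<in>null_sets (param_lebesgue k).
            {\<theta>\<in>space (param_lebesgue k). Theta k (pi_of k \<theta>) (gamma_of \<theta>) \<and>
               (\<exists>\<alpha>. optimal k (pi_of k \<theta>) (gamma_of \<theta>) \<rho> \<alpha> \<and> masked k (pi_of k \<theta>) \<alpha>)} \<subseteq> N)"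
  using fair_part[OF assms] mask_part[OF assms] N1_null[of k \<rho>] N2_null[of k \<rho>] by blast

end
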